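(* Let $q$ be a prime power, $n=q^2-1$, and let $x\in\{0,\ldots,n-1\}$ be the minimal representative of its cyclotomic coset $I_x$. Then: $I_x$ is an FR-asymmetric coset if and only if $n-xq>x$; $I_x$ is a symmetric coset if and only if $n-xq=x$; $I_x$ is an SR-asymmetric coset if and only if $n-xq<x$ (where $n-xq$ denotes the residue of $-xq$ modulo $n$ in $\{0,\ldots,n-1\}$).
   Context: Identify $\mathbb{Z}_n$ with $\{0,\ldots,n-1\}$. The cyclotomic coset of $x$ with respect to $q$ is $I_x=\{x,\,xq\bmod n\}$; its minimal representative is its least element. The (Euclidean) reciprocal coset of $I_x$ is $I_{n-x}$ (equivalently $I_{n-qx}$). $I_x$ is symmetric if $I_{n-x}=I_x$, and asymmetric otherwise. If $I_x$ is asymmetric with reciprocal coset $I_y$, where $x,y$ are the minimal representatives and $x<y$, then $I_x$ is called the FR-asymmetric coset and $I_y$ the SR-asymmetric coset of the pair. *)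

theory Defs
  imports "HOL-Computational_Algebra.Primes"
begin

text \<open>Cyclotomic coset of x modulo n with respect to q, as in the paper's context
  (for n = q^2 - 1 it is the set {x, xq mod n}).\<close>
definition cyc_coset :: "nat \<Rightarrow> nat \<Rightarrow> nat \<Rightarrow> nat set" where
  "cyc_coset n q x = {x mod n, (x * q) mod n}"

definition min_rep :: "nat \<Rightarrow> nat \<Rightarrow> nat \<Rightarrow> nat" where
  "min_rep n q x = Min (cyc_coset n q x)"

definition neg_mod :: "nat \<Rightarrow> nat \<Rightarrow> nat" where
  "neg_mod n x = (n - x mod n) mod n"

definition recip_coset :: "nat \<Rightarrow> nat \<Rightarrow> nat \<Rightarrow> nat set" where
  "recip_coset n q x = cyc_coset n q (neg_mod n x)"

definition symmetric_coset :: "nat \<Rightarrow> nat \<Rightarrow> nat \<Rightarrow> bool" where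
  "symmetric_coset n q x \<longleftrightarrow> recip_coset n q x = cyc_coset n q x"

definition FR_asymmetric :: "nat \<Rightarrow> nat \<Rightarrow> nat \<Rightarrow> bool" where
  "FR_asymmetric n q x \<longleftrightarrow> \<not> symmetric_coset n q x \<and>
     min_rep n q x < min_rep n q (neg_mod n x)"

definition SR_asymmetric :: "nat \<Rightarrow> nat \<Rightarrow> nat \<Rightarrow> bool" where
  "SR_asymmetric n q x \<longleftrightarrow> \<not> symmetric_coset n q x \<and>
     min_rep n q (neg_mod n x) < min_rep n q x"

definition prime_power :: "nat \<Rightarrow> bool" where
  "prime_power q \<longleftrightarrow> (\<exists>p k. prime p \<and> k \<ge> 1 \<and> q = p ^ k)"

end

theory Submission
  imports Defs
begin

theorem mainTheorem5:
  fixes q n x :: nat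
  assumes "prime_power q"
    and "n = q ^ 2 - 1"
    and "x < n"
    and "min_rep n q x = x"
  shows "(FR_asymmetric n q x \<longleftrightarrow> neg_mod n (x * q) > x)
       \<and> (symmetric_coset n q x \<longleftrightarrow> neg_mod n (x * q) = x)
       \<and> (SR_asymmetric n q x \<longleftrightarrow> neg_mod n (x * q) < x)"
proof -
  define y where "y = x * q mod n"
  have n0: "n > 0" using assms(3) by simp
  have xm: "x mod n = x" using assms(3) by simp
  have yn: "y < n" using n0 y_def by simp
  have xy: "x \<le> y" using assms(4) unfolding min_rep_def cyc_coset_def y_def[symmetric] xm
    by (metis Min_in Min_le finite.emptyI finite.insertI insert_iff insert_not_empty min_def singletonD)
  show ?thesis
  proof (cases "x = 0")
    case True
    then show ?thesis
      by (simp add: FR_asymmetric_def SR_asymmetric_def symmetric_coset_def recip_coset_def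
          neg_mod_def cyc_coset_def min_rep_def)
  next
    case False
    hence x0: "x > 0" by simp
    have y0: "y > 0" using xy x0 by simp
    have a: "neg_mod n (x*q) = n - y" unfolding neg_mod_def y_def[symmetric] using y0 yn by simp
    have b: "neg_mod n x = n - x" unfolding neg_mod_def using x0 assms(3) by simp
    have bq: "(n - x) * q mod n = n - y"
    proof -
      have "int ((n - x) * q mod n) = ((int n - int x) * int q) mod int n"
        using assms(3) by (simp add: of_nat_diff zmod_int)
      also have "\<dots> = (- (int x * int q)) mod int n"
        by (metis (no_types, opaque_lifting) mod_mult_self1 left_diff_distrib' diff_conv_add_uminus
            add.commute mult.commute)
      also have "\<dots> = (- (int (x*q mod n))) mod int n"
        by (metis mod_minus_eq of_nat_mult zmod_int)
      also have "\<dots> = int n - int y" using y0 yn unfolding y_def[symmetric]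
        by (simp add: zmod_zminus1_eq_if)
      finally show ?thesis using yn by simp
    qed
    have rc: "recip_coset n q x = {n - x, n - y}"
      unfolding recip_coset_def cyc_coset_def b bq using assms(3) x0 by simp
    have cc: "cyc_coset n q x = {x, y}" unfolding cyc_coset_def y_def xm by simp
    have mr: "min_rep n q (neg_mod n x) = n - y"
      unfolding min_rep_def cyc_coset_def b bq using assms(3) xy x0 yn by (simp add: min_def; linarith)
    have sym: "symmetric_coset n q x \<longleftrightarrow> n - y = x"
      unfolding symmetric_coset_def rc cc doubleton_eq_iff using xy yn assms(3) by auto
    show ?thesis
      unfolding FR_asymmetric_def SR_asymmetric_def sym mr a assms(4) by auto
  qed
qed

end
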